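(* An integral domain $D$ is a $\ast$-waf-SH domain if and only if $D$ is a $\ast$-SH domain whose $\ast$-class group $Cl_\ast(D)$ is a torsion group.
   Context: $\ast$ is a star operation on $D$ of finite character. A $\ast$-ideal is a nonzero fractional ideal $I$ with $I^\ast=I$; of finite type if $I=J^\ast$ for some nonzero finitely generated $J$. $I$ is $\ast$-invertible if $(II^{-1})^\ast=D$. $Cl_\ast(D)$ is the group of $\ast$-invertible fractional $\ast$-ideals under $(I,J)\mapsto (IJ)^\ast$ modulo the subgroup of nonzero principal fractional ideals. A $\ast$-homog ideal is a proper integral $\ast$-ideal $I$ of finite type such that $(A+B)^\ast\neq D$ for every pair $A,B$ of proper integral $\ast$-ideals of finite type containing $I$. $D$ is a $\ast$-SH domain if for every nonzero nonunit $x$, $xD$ is a $\ast$-product $(I_1\cdots I_n)^\ast$ of finitely many $\ast$-homog ideals. A $\ast$-waf-homog ideal is a $\ast$-homog ideal $I$ such that, if $I$ is $\ast$-invertible, then for every $\ast$-invertible $\ast$-ideal $J$ containing $I$ there is $j\ge1$ with $(J^j)^\ast$ principal. $D$ is a $\ast$-waf-SH domain if for every nonzero nonunit $x$, $xD$ is a $\ast$-product of finitely many $\ast$-waf-homog ideals. *)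

theory Defs
  imports Main
begin

text \<open>An integral domain D is modelled as a subring of a field 'k which is its
fraction field. Fractional ideals are D-submodules of 'k.\<close>

definition is_domain_with_frac_field :: "'k::field set \<Rightarrow> bool" where
  "is_domain_with_frac_field D \<longleftrightarrow>
     0 \<in> D \<and> 1 \<in> D \<and> (\<forall>x\<in>D. \<forall>y\<in>D. x + y \<in> D \<and> x * y \<in> D) \<and> (\<forall>x\<in>D. - x \<in> D) \<and>
     (\<forall>z. \<exists>a\<in>D. \<exists>b\<in>D. b \<noteq> 0 \<and> z = a / b)"

definition D_submod :: "'k::field set \<Rightarrow> 'k set \<Rightarrow> bool" where
  "D_submod D M \<longleftrightarrow> 0 \<in> M \<and> (\<forall>x\<in>M. \<forall>y\<in>M. x + y \<in> M) \<and> (\<forall>d\<in>D. \<forall>x\<in>M. d * x \<in> M)"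

definition gen :: "'k::field set \<Rightarrow> 'k set \<Rightarrow> 'k set" where
  "gen D S = \<Inter>{M. D_submod D M \<and> S \<subseteq> M}"

definition fin_gen :: "'k::field set \<Rightarrow> 'k set \<Rightarrow> bool" where
  "fin_gen D I \<longleftrightarrow> (\<exists>S. finite S \<and> I = gen D S)"

definition ideal_mult :: "'k::field set \<Rightarrow> 'k set \<Rightarrow> 'k set \<Rightarrow> 'k set" where
  "ideal_mult D I J = gen D {i * j | i j. i \<in> I \<and> j \<in> J}"

definition ideal_add :: "'k::field set \<Rightarrow> 'k set \<Rightarrow> 'k set \<Rightarrow> 'k set" where
  "ideal_add D I J = gen D (I \<union> J)"

fun ideal_pow :: "'k::field set \<Rightarrow> 'k set \<Rightarrow> nat \<Rightarrow> 'k set" where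
  "ideal_pow D I 0 = D"
| "ideal_pow D I (Suc n) = ideal_mult D (ideal_pow D I n) I"

definition ideal_prod :: "'k::field set \<Rightarrow> 'k set list \<Rightarrow> 'k set" where
  "ideal_prod D Is = foldr (ideal_mult D) Is D"

definition principal :: "'k::field set \<Rightarrow> 'k \<Rightarrow> 'k set" where
  "principal D x = (\<lambda>d. x * d) ` D"

definition scale :: "'k::field \<Rightarrow> 'k set \<Rightarrow> 'k set" where
  "scale x I = (\<lambda>y. x * y) ` I"

definition ideal_inv :: "'k::field set \<Rightarrow> 'k set \<Rightarrow> 'k set" where
  "ideal_inv D I = {x. \<forall>i\<in>I. x * i \<in> D}"

definition frac_ideal :: "'k::field set \<Rightarrow> 'k set \<Rightarrow> bool" where
  "frac_ideal D I \<longleftrightarrow> D_submod D I \<and> I \<noteq> {0} \<and> (\<exists>d\<in>D. d \<noteq> 0 \<and> (\<forall>x\<in>I. d * x \<in> D))"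

definition star_operation :: "'k::field set \<Rightarrow> ('k set \<Rightarrow> 'k set) \<Rightarrow> bool" where
  "star_operation D st \<longleftrightarrow>
     (\<forall>I. frac_ideal D I \<longrightarrow> frac_ideal D (st I)) \<and>
     (\<forall>x. x \<noteq> 0 \<longrightarrow> st (principal D x) = principal D x) \<and>
     (\<forall>x I. x \<noteq> 0 \<and> frac_ideal D I \<longrightarrow> st (scale x I) = scale x (st I)) \<and>
     (\<forall>I. frac_ideal D I \<longrightarrow> I \<subseteq> st I) \<and>
     (\<forall>I J. frac_ideal D I \<and> frac_ideal D J \<and> I \<subseteq> J \<longrightarrow> st I \<subseteq> st J) \<and>
     (\<forall>I. frac_ideal D I \<longrightarrow> st (st I) = st I)"

definition finite_character :: "'k::field set \<Rightarrow> ('k set \<Rightarrow> 'k set) \<Rightarrow> bool" where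
  "finite_character D st \<longleftrightarrow>
     (\<forall>I. frac_ideal D I \<longrightarrow>
        st I = \<Union>{st J | J. frac_ideal D J \<and> fin_gen D J \<and> J \<subseteq> I})"

definition star_ideal :: "'k::field set \<Rightarrow> ('k set \<Rightarrow> 'k set) \<Rightarrow> 'k set \<Rightarrow> bool" where
  "star_ideal D st I \<longleftrightarrow> frac_ideal D I \<and> st I = I"

definition finite_type :: "'k::field set \<Rightarrow> ('k set \<Rightarrow> 'k set) \<Rightarrow> 'k set \<Rightarrow> bool" where
  "finite_type D st I \<longleftrightarrow> (\<exists>J. frac_ideal D J \<and> fin_gen D J \<and> I = st J)"

definition star_invertible :: "'k::field set \<Rightarrow> ('k set \<Rightarrow> 'k set) \<Rightarrow> 'k set \<Rightarrow> bool" where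
  "star_invertible D st I \<longleftrightarrow> frac_ideal D I \<and> st (ideal_mult D I (ideal_inv D I)) = D"

definition is_principal :: "'k::field set \<Rightarrow> 'k set \<Rightarrow> bool" where
  "is_principal D I \<longleftrightarrow> (\<exists>x. x \<noteq> 0 \<and> I = principal D x)"

definition proper_integral_star_ideal :: "'k::field set \<Rightarrow> ('k set \<Rightarrow> 'k set) \<Rightarrow> 'k set \<Rightarrow> bool" where
  "proper_integral_star_ideal D st I \<longleftrightarrow> star_ideal D st I \<and> I \<subseteq> D \<and> I \<noteq> D"

definition star_homog :: "'k::field set \<Rightarrow> ('k set \<Rightarrow> 'k set) \<Rightarrow> 'k set \<Rightarrow> bool" where
  "star_homog D st I \<longleftrightarrow>
     proper_integral_star_ideal D st I \<and> finite_type D st I \<and>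
     (\<forall>A B. proper_integral_star_ideal D st A \<and> finite_type D st A \<and>
            proper_integral_star_ideal D st B \<and> finite_type D st B \<and>
            I \<subseteq> A \<and> I \<subseteq> B \<longrightarrow> st (ideal_add D A B) \<noteq> D)"

definition star_waf_homog :: "'k::field set \<Rightarrow> ('k set \<Rightarrow> 'k set) \<Rightarrow> 'k set \<Rightarrow> bool" where
  "star_waf_homog D st I \<longleftrightarrow>
     star_homog D st I \<and>
     (star_invertible D st I \<longrightarrow>
        (\<forall>J. star_invertible D st J \<and> star_ideal D st J \<and> I \<subseteq> J \<longrightarrow>
             (\<exists>j\<ge>1. is_principal D (st (ideal_pow D J j)))))"

definition nonzero_nonunit :: "'k::field set \<Rightarrow> 'k \<Rightarrow> bool" where
  "nonzero_nonunit D x \<longleftrightarrow> x \<in> D \<and> x \<noteq> 0 \<and> inverse x \<notin> D"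

definition star_SH :: "'k::field set \<Rightarrow> ('k set \<Rightarrow> 'k set) \<Rightarrow> bool" where
  "star_SH D st \<longleftrightarrow>
     (\<forall>x. nonzero_nonunit D x \<longrightarrow>
        (\<exists>Is. (\<forall>I\<in>set Is. star_homog D st I) \<and> principal D x = st (ideal_prod D Is)))"

definition star_waf_SH :: "'k::field set \<Rightarrow> ('k set \<Rightarrow> 'k set) \<Rightarrow> bool" where
  "star_waf_SH D st \<longleftrightarrow>
     (\<forall>x. nonzero_nonunit D x \<longrightarrow>
        (\<exists>Is. (\<forall>I\<in>set Is. star_waf_homog D st I) \<and> principal D x = st (ideal_prod D Is)))"

fun star_pow :: "'k::field set \<Rightarrow> ('k set \<Rightarrow> 'k set) \<Rightarrow> 'k set \<Rightarrow> nat \<Rightarrow> 'k set" where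
  "star_pow D st I 0 = D"
| "star_pow D st I (Suc n) = st (ideal_mult D (star_pow D st I n) I)"

text \<open>Cl_*(D) is torsion: every class [I] of a *-invertible *-ideal has finite order,
i.e. some positive group power of I lies in the subgroup of principal ideals.\<close>
definition star_class_group_torsion :: "'k::field set \<Rightarrow> ('k set \<Rightarrow> 'k set) \<Rightarrow> bool" where
  "star_class_group_torsion D st \<longleftrightarrow>
     (\<forall>I. star_invertible D st I \<and> star_ideal D st I \<longrightarrow>
        (\<exists>n\<ge>1. is_principal D (star_pow D st I n)))"

end

theory Submission
  imports Defs
begin


lemma gen_submod: "D_submod D (gen D S)"
  unfolding gen_def D_submod_def Inter_iff by blast
lemma gen_sub: "S \<subseteq> gen D S"
  unfolding gen_def by blast
lemma gen_least: "D_submod D M \<Longrightarrow> S \<subseteq> M \<Longrightarrow> gen D S \<subseteq> M"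
  unfolding gen_def by blast
lemma im_submod: "D_submod D (ideal_mult D A B)"
  unfolding ideal_mult_def by (rule gen_submod)
lemma im_gen: "a \<in> A \<Longrightarrow> b \<in> B \<Longrightarrow> a * b \<in> ideal_mult D A B"
proof -
  assume "a \<in> A" "b \<in> B"
  then have "a * b \<in> {i * j | i j. i \<in> A \<and> j \<in> B}" by blast
  then show ?thesis unfolding ideal_mult_def by (rule subsetD[OF gen_sub])
qed
lemma im_least: "D_submod D M \<Longrightarrow> (\<And>a b. a \<in> A \<Longrightarrow> b \<in> B \<Longrightarrow> a * b \<in> M) \<Longrightarrow> ideal_mult D A B \<subseteq> M"
  unfolding ideal_mult_def by (rule gen_least) blast+
lemma im_comm: "ideal_mult D A B = ideal_mult D B A"
proof -
  have "{i * j | i j. i \<in> A \<and> j \<in> B} = {i * j | i j. i \<in> B \<and> j \<in> A}"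
  proof (intro set_eqI iffI)
    fix x assume "x \<in> {i * j | i j. i \<in> A \<and> j \<in> B}"
    then obtain i j where "x = i * j" "i \<in> A" "j \<in> B" by blast
    then have "x = j * i" by (simp add: mult.commute)
    with \<open>i \<in> A\<close> \<open>j \<in> B\<close> show "x \<in> {i * j | i j. i \<in> B \<and> j \<in> A}" by blast
  next
    fix x assume "x \<in> {i * j | i j. i \<in> B \<and> j \<in> A}"
    then obtain i j where "x = i * j" "i \<in> B" "j \<in> A" by blast
    then have "x = j * i" by (simp add: mult.commute)
    with \<open>i \<in> B\<close> \<open>j \<in> A\<close> show "x \<in> {i * j | i j. i \<in> A \<and> j \<in> B}" by blast
  qed
  thus ?thesis unfolding ideal_mult_def by (rule arg_cong)
qed

lemma im_mono: "A \<subseteq> A' \<Longrightarrow> B \<subseteq> B' \<Longrightarrow> ideal_mult D A B \<subseteq> ideal_mult D A' B'"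
proof -
  assume "A \<subseteq> A'" "B \<subseteq> B'"
  show ?thesis
  proof (rule im_least[OF im_submod])
    fix a b assume "a \<in> A" "b \<in> B"
    then show "a * b \<in> ideal_mult D A' B'" using \<open>A \<subseteq> A'\<close> \<open>B \<subseteq> B'\<close> by (intro im_gen) auto
  qed
qed

lemma submod_pre: "D_submod D M \<Longrightarrow> D_submod D {u. c * u \<in> M}"
proof -
  assume M: "D_submod D M"
  show ?thesis unfolding D_submod_def
  proof (intro conjI ballI)
    show "0 \<in> {u. c * u \<in> M}" using M unfolding D_submod_def by simp
    fix x assume x: "x \<in> {u. c * u \<in> M}"
    { fix y assume y: "y \<in> {u. c * u \<in> M}"
      have "c * (x + y) = c * x + c * y" by (simp add: distrib_left)
      then show "x + y \<in> {u. c * u \<in> M}" using x y M unfolding D_submod_def by simp }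
    { fix d assume d: "d \<in> D"
      have "d * (c * x) \<in> M" using x d M unfolding D_submod_def by blast
      then show "d * x \<in> {u. c * u \<in> M}" by (simp add: mult.left_commute) }
  qed
qed

lemma im_assoc_sub: "ideal_mult D (ideal_mult D A B) C \<subseteq> ideal_mult D A (ideal_mult D B C)"
proof (rule im_least[OF im_submod])
  fix u c assume u: "u \<in> ideal_mult D A B" and c: "c \<in> C"
  have "ideal_mult D A B \<subseteq> {u. c * u \<in> ideal_mult D A (ideal_mult D B C)}"
  proof (rule im_least[OF submod_pre[OF im_submod]])
    fix a b assume "a \<in> A" "b \<in> B"
    then have "a * (b * c) \<in> ideal_mult D A (ideal_mult D B C)" using c by (intro im_gen)
    thus "a * b \<in> {u. c * u \<in> ideal_mult D A (ideal_mult D B C)}" by (simp add: ac_simps)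
  qed
  with u show "u * c \<in> ideal_mult D A (ideal_mult D B C)" by (auto simp: mult.commute)
qed

lemma im_assoc: "ideal_mult D (ideal_mult D A B) C = ideal_mult D A (ideal_mult D B C)"
proof
  show "ideal_mult D (ideal_mult D A B) C \<subseteq> ideal_mult D A (ideal_mult D B C)" by (rule im_assoc_sub)
  have "ideal_mult D A (ideal_mult D B C) = ideal_mult D (ideal_mult D B C) A" by (rule im_comm)
  also have "\<dots> \<subseteq> ideal_mult D B (ideal_mult D C A)" by (rule im_assoc_sub)
  also have "\<dots> = ideal_mult D (ideal_mult D C A) B" by (rule im_comm)
  also have "\<dots> \<subseteq> ideal_mult D C (ideal_mult D A B)" by (rule im_assoc_sub)
  also have "\<dots> = ideal_mult D (ideal_mult D A B) C" by (rule im_comm)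
  finally show "ideal_mult D A (ideal_mult D B C) \<subseteq> ideal_mult D (ideal_mult D A B) C" .
qed

lemma scale_submod: "D_submod D X \<Longrightarrow> D_submod D (scale c X)"
proof -
  assume M: "D_submod D X"
  show ?thesis unfolding D_submod_def
  proof (intro conjI ballI)
    have "0 = c * 0" by simp
    then show "0 \<in> scale c X" using M unfolding D_submod_def scale_def by blast
    fix x assume "x \<in> scale c X"
    then obtain x' where x': "x' \<in> X" "x = c * x'" unfolding scale_def by blast
    { fix y assume "y \<in> scale c X"
      then obtain y' where y': "y' \<in> X" "y = c * y'" unfolding scale_def by blast
      have "x + y = c * (x' + y')" using x' y' by (simp add: distrib_left)
      moreover have "x' + y' \<in> X" using x' y' M unfolding D_submod_def by blast
      ultimately show "x + y \<in> scale c X" unfolding scale_def by blast }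
    { fix d assume d: "d \<in> D"
      have "d * x = c * (d * x')" using x' by (simp add: mult.left_commute)
      moreover have "d * x' \<in> X" using x' d M unfolding D_submod_def by blast
      ultimately show "d * x \<in> scale c X" unfolding scale_def by blast }
  qed
qed

lemma im_principal: assumes X: "D_submod D X" and one: "1 \<in> D"
  shows "ideal_mult D (Defs.principal D c) X = scale c X"
proof
  show "ideal_mult D (Defs.principal D c) X \<subseteq> scale c X"
  proof (rule im_least[OF scale_submod[OF X]])
    fix a b assume "a \<in> Defs.principal D c" "b \<in> X"
    then obtain d where "d \<in> D" "a = c * d" unfolding principal_def by auto
    with \<open>b \<in> X\<close> X have "d * b \<in> X" unfolding D_submod_def by auto
    thus "a * b \<in> scale c X" using \<open>a = c*d\<close> unfolding scale_def by (auto simp: ac_simps)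
  qed
  show "scale c X \<subseteq> ideal_mult D (Defs.principal D c) X"
  proof
    fix y assume "y \<in> scale c X"
    then obtain x where x: "x \<in> X" "y = c * x" unfolding scale_def by auto
    have "c * 1 \<in> Defs.principal D c" using one unfolding principal_def by auto
    from im_gen[OF this x(1)] x(2) show "y \<in> ideal_mult D (Defs.principal D c) X" by simp
  qed
qed

lemma principal_one: "Defs.principal D 1 = D" unfolding principal_def by simp

lemma scale_scale: "scale a (scale b X) = scale (a*b) X"
  unfolding scale_def by (simp add: image_image mult.assoc)
lemma scale_one: "scale 1 X = X" unfolding scale_def by simp
lemma scale_principal: "scale a (Defs.principal D b) = Defs.principal D (a*b)"
  unfolding scale_def principal_def by (simp add: image_image mult.assoc)




locale SD =
  fixes D :: "'k::field set" and st :: "'k set \<Rightarrow> 'k set"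
  assumes dom: "is_domain_with_frac_field D" and so: "star_operation D st"
begin

lemmas domc = dom[unfolded is_domain_with_frac_field_def]
lemma D0: "0 \<in> D" using domc by (rule conjunct1)
lemma D1: "1 \<in> D" using conjunct2[OF domc] by (rule conjunct1)
lemma Dclos: "\<forall>x\<in>D. \<forall>y\<in>D. x + y \<in> D \<and> x * y \<in> D" using conjunct2[OF conjunct2[OF domc]] by (rule conjunct1)
lemma Dadd: "x \<in> D \<Longrightarrow> y \<in> D \<Longrightarrow> x + y \<in> D" using Dclos by blast
lemma Dmul: "x \<in> D \<Longrightarrow> y \<in> D \<Longrightarrow> x * y \<in> D" using Dclos by blast
lemma Dfrac: "\<exists>a\<in>D. \<exists>b\<in>D. b \<noteq> 0 \<and> z = a / b"
proof -
  have "\<forall>z. \<exists>a\<in>D. \<exists>b\<in>D. b \<noteq> 0 \<and> z = a / b" using conjunct2[OF conjunct2[OF conjunct2[OF conjunct2[OF domc]]]] .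
  then show ?thesis by (rule spec)
qed

lemma D_submodD: "D_submod D D" unfolding D_submod_def using D0 Dadd Dmul by blast

lemmas soc = so[unfolded star_operation_def]
lemma st_frac: "frac_ideal D I \<Longrightarrow> frac_ideal D (st I)" using conjunct1[OF soc] by blast
lemma st_princ: "x \<noteq> 0 \<Longrightarrow> st (Defs.principal D x) = Defs.principal D x" using conjunct1[OF conjunct2[OF soc]] by blast
lemma st_scale: "x \<noteq> 0 \<Longrightarrow> frac_ideal D I \<Longrightarrow> st (scale x I) = scale x (st I)" using conjunct1[OF conjunct2[OF conjunct2[OF soc]]] by blast
lemma st_ext: "frac_ideal D I \<Longrightarrow> I \<subseteq> st I" using conjunct1[OF conjunct2[OF conjunct2[OF conjunct2[OF soc]]]] by blast
lemma st_mono: "frac_ideal D I \<Longrightarrow> frac_ideal D J \<Longrightarrow> I \<subseteq> J \<Longrightarrow> st I \<subseteq> st J" using conjunct1[OF conjunct2[OF conjunct2[OF conjunct2[OF conjunct2[OF soc]]]]] by blast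
lemma st_idem: "frac_ideal D I \<Longrightarrow> st (st I) = st I" using conjunct2[OF conjunct2[OF conjunct2[OF conjunct2[OF conjunct2[OF soc]]]]] by blast

lemma frac_sub: "frac_ideal D I \<Longrightarrow> D_submod D I" unfolding frac_ideal_def by blast
lemma frac_nz: assumes "frac_ideal D I" shows "\<exists>a\<in>I. a \<noteq> 0"
proof -
  have "0 \<in> I" "I \<noteq> {0}" using assms unfolding frac_ideal_def D_submod_def by auto
  then show ?thesis by blast
qed

lemma st_D: "st D = D"
proof -
  have "st (Defs.principal D 1) = Defs.principal D 1" by (rule st_princ) simp
  then show ?thesis by (simp only: principal_one)
qed

lemma frac_D: "frac_ideal D D" unfolding frac_ideal_def
proof (intro conjI)
  show "D_submod D D" by (rule D_submodD)
  show "D \<noteq> {0}" using D1 by auto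
  show "\<exists>d\<in>D. d \<noteq> 0 \<and> (\<forall>x\<in>D. d * x \<in> D)" using D1 by (intro bexI[of _ 1]) auto
qed

lemma principal_submod: "D_submod D (Defs.principal D x)"
proof -
  have "Defs.principal D x = scale x D" unfolding principal_def scale_def by simp
  then show ?thesis using scale_submod[OF D_submodD] by simp
qed

lemma frac_principal: assumes x: "x \<noteq> 0" shows "frac_ideal D (Defs.principal D x)"
  unfolding frac_ideal_def
proof (intro conjI)
  show "D_submod D (Defs.principal D x)" by (rule principal_submod)
  have "x * 1 \<in> Defs.principal D x" using D1 unfolding principal_def by blast
  then show "Defs.principal D x \<noteq> {0}" using x by auto
  obtain p q where pq: "p \<in> D" "q \<in> D" "q \<noteq> 0" "x = p / q" using Dfrac by blast
  have "\<forall>y\<in>Defs.principal D x. q * y \<in> D"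
  proof
    fix y assume "y \<in> Defs.principal D x"
    then obtain d where d: "d \<in> D" "y = x * d" unfolding principal_def by blast
    have "q * y = p * d" using pq d by (simp add: field_simps)
    then show "q * y \<in> D" using pq d Dmul by simp
  qed
  then show "\<exists>d\<in>D. d \<noteq> 0 \<and> (\<forall>x\<in>Defs.principal D x. d * x \<in> D)" using pq by blast
qed

lemma frac_mult: assumes A: "frac_ideal D A" and B: "frac_ideal D B"
  shows "frac_ideal D (ideal_mult D A B)"
  unfolding frac_ideal_def
proof (intro conjI)
  show "D_submod D (ideal_mult D A B)" by (rule im_submod)
  obtain a b where ab: "a \<in> A" "a \<noteq> 0" "b \<in> B" "b \<noteq> 0" using frac_nz[OF A] frac_nz[OF B] by blast
  have "a * b \<in> ideal_mult D A B" using ab by (intro im_gen)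
  moreover have "a * b \<noteq> 0" using ab by simp
  ultimately show "ideal_mult D A B \<noteq> {0}" by blast
  obtain d where d: "d \<in> D" "d \<noteq> 0" "\<forall>x\<in>A. d * x \<in> D" using A unfolding frac_ideal_def by blast
  obtain e where e: "e \<in> D" "e \<noteq> 0" "\<forall>x\<in>B. e * x \<in> D" using B unfolding frac_ideal_def by blast
  have "ideal_mult D A B \<subseteq> {u. (d * e) * u \<in> D}"
  proof (rule im_least[OF submod_pre[OF D_submodD]])
    fix x y assume "x \<in> A" "y \<in> B"
    then have "(d * x) * (e * y) \<in> D" using d e Dmul by blast
    then show "x * y \<in> {u. (d * e) * u \<in> D}" by (simp add: ac_simps)
  qed
  moreover have "d * e \<in> D" "d * e \<noteq> 0" using d e Dmul by auto
  ultimately show "\<exists>c\<in>D. c \<noteq> 0 \<and> (\<forall>x\<in>ideal_mult D A B. c * x \<in> D)" by blast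
qed

lemma scale_eq: "D_submod D A \<Longrightarrow> scale c A = ideal_mult D (Defs.principal D c) A"
  using im_principal[OF _ D1] by simp

lemma frac_scale: "c \<noteq> 0 \<Longrightarrow> frac_ideal D A \<Longrightarrow> frac_ideal D (scale c A)"
  using scale_eq[OF frac_sub] frac_mult frac_principal by metis

lemma frac_inv: assumes A: "frac_ideal D A" shows "frac_ideal D (ideal_inv D A)"
  unfolding frac_ideal_def
proof (intro conjI)
  show "D_submod D (ideal_inv D A)" unfolding D_submod_def
  proof (intro conjI ballI)
    show "0 \<in> ideal_inv D A" unfolding ideal_inv_def using D0 by simp
    fix x assume x: "x \<in> ideal_inv D A"
    { fix y assume y: "y \<in> ideal_inv D A"
      show "x + y \<in> ideal_inv D A" unfolding ideal_inv_def mem_Collect_eq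
      proof
        fix i assume "i \<in> A"
        then have "x * i \<in> D" "y * i \<in> D" using x y unfolding ideal_inv_def by blast+
        then show "(x + y) * i \<in> D" using Dadd by (simp add: distrib_right)
      qed }
    { fix d assume d: "d \<in> D"
      show "d * x \<in> ideal_inv D A" unfolding ideal_inv_def mem_Collect_eq
      proof
        fix i assume "i \<in> A"
        then have "x * i \<in> D" using x unfolding ideal_inv_def by blast
        then show "(d * x) * i \<in> D" using Dmul d by (simp add: mult.assoc)
      qed }
  qed
  obtain d where d: "d \<in> D" "d \<noteq> 0" "\<forall>x\<in>A. d * x \<in> D" using A unfolding frac_ideal_def by blast
  then have "d \<in> ideal_inv D A" unfolding ideal_inv_def by blast
  then show "ideal_inv D A \<noteq> {0}" using d by auto
  obtain a where a: "a \<in> A" "a \<noteq> 0" using frac_nz[OF A] by blast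
  obtain p q where pq: "p \<in> D" "q \<in> D" "q \<noteq> 0" "a = p / q" using Dfrac by blast
  have p0: "p \<noteq> 0" using pq a by auto
  have "\<forall>u\<in>ideal_inv D A. p * u \<in> D"
  proof
    fix u assume "u \<in> ideal_inv D A"
    then have "u * a \<in> D" using a unfolding ideal_inv_def by blast
    moreover have "p * u = (u * a) * q" using pq by (simp add: field_simps)
    ultimately show "p * u \<in> D" using pq(2) Dmul by metis
  qed
  then show "\<exists>c\<in>D. c \<noteq> 0 \<and> (\<forall>x\<in>ideal_inv D A. c * x \<in> D)" using pq p0 by blast
qed

lemma st_int: "frac_ideal D A \<Longrightarrow> A \<subseteq> D \<Longrightarrow> st A \<subseteq> D"
  using st_mono[OF _ frac_D] st_D by blast

lemma DA: "D_submod D A \<Longrightarrow> ideal_mult D D A = A"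
  using im_principal[OF _ D1, of A 1] principal_one scale_one by metis

lemma st_mult_left: assumes A: "frac_ideal D A" and B: "frac_ideal D B"
  shows "st (ideal_mult D (st A) B) = st (ideal_mult D A B)"
proof
  have AB: "frac_ideal D (ideal_mult D A B)" using A B by (rule frac_mult)
  have sAB: "frac_ideal D (ideal_mult D (st A) B)" using st_frac[OF A] B by (rule frac_mult)
  show "st (ideal_mult D A B) \<subseteq> st (ideal_mult D (st A) B)"
    using st_mono[OF AB sAB] im_mono[OF st_ext[OF A] order_refl] by blast
  have "ideal_mult D (st A) B \<subseteq> st (ideal_mult D A B)"
  proof (rule im_least[OF frac_sub[OF st_frac[OF AB]]])
    fix a b assume a: "a \<in> st A" and b: "b \<in> B"
    show "a * b \<in> st (ideal_mult D A B)"
    proof (cases "b = 0")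
      case True
      then show ?thesis using frac_sub[OF st_frac[OF AB]] unfolding D_submod_def by simp
    next
      case False
      have "scale b A \<subseteq> ideal_mult D A B"
      proof
        fix y assume "y \<in> scale b A"
        then obtain x where x: "x \<in> A" "y = b * x" unfolding scale_def by blast
        then have "x * b \<in> ideal_mult D A B" using b by (intro im_gen)
        then show "y \<in> ideal_mult D A B" using x by (simp add: mult.commute)
      qed
      then have "st (scale b A) \<subseteq> st (ideal_mult D A B)"
        using st_mono[OF frac_scale[OF False A] AB] by blast
      moreover have "a * b \<in> scale b (st A)" using a unfolding scale_def by (metis image_eqI mult.commute)
      ultimately show ?thesis using st_scale[OF False A] by blast
    qed
  qed
  then have "st (ideal_mult D (st A) B) \<subseteq> st (st (ideal_mult D A B))"
    using st_mono[OF sAB st_frac[OF AB]] by blast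
  then show "st (ideal_mult D (st A) B) \<subseteq> st (ideal_mult D A B)" using st_idem[OF AB] by simp
qed

end



lemma im_swap: "ideal_mult D (ideal_mult D a b) (ideal_mult D c d) = ideal_mult D (ideal_mult D a c) (ideal_mult D b d)"
proof -
  have "ideal_mult D (ideal_mult D a b) (ideal_mult D c d) = ideal_mult D a (ideal_mult D b (ideal_mult D c d))" by (rule im_assoc)
  also have "ideal_mult D b (ideal_mult D c d) = ideal_mult D (ideal_mult D b c) d" by (rule im_assoc[symmetric])
  also have "ideal_mult D b c = ideal_mult D c b" by (rule im_comm)
  also have "ideal_mult D (ideal_mult D c b) d = ideal_mult D c (ideal_mult D b d)" by (rule im_assoc)
  also have "ideal_mult D a (ideal_mult D c (ideal_mult D b d)) = ideal_mult D (ideal_mult D a c) (ideal_mult D b d)" by (rule im_assoc[symmetric])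
  finally show ?thesis .
qed

context SD begin

declare star_pow.simps(2)[simp del]

definition sm where "sm A B = st (ideal_mult D A B)"
abbreviation sid where "sid A \<equiv> star_ideal D st A"

lemma sidD: "sid A \<Longrightarrow> frac_ideal D A" "sid A \<Longrightarrow> st A = A" unfolding star_ideal_def by auto

lemma sm_closed: "sid A \<Longrightarrow> sid B \<Longrightarrow> sid (sm A B)"
  unfolding sm_def star_ideal_def using st_frac st_idem frac_mult by blast

lemma sm_comm: "sm A B = sm B A" unfolding sm_def using im_comm by metis

lemma sm_assoc: assumes A: "sid A" and B: "sid B" and C: "sid C"
  shows "sm (sm A B) C = sm A (sm B C)"
proof -
  have fA: "frac_ideal D A" and fB: "frac_ideal D B" and fC: "frac_ideal D C" using A B C sidD by auto
  have "sm (sm A B) C = st (ideal_mult D (ideal_mult D A B) C)"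
    unfolding sm_def by (rule st_mult_left[OF frac_mult[OF fA fB] fC])
  also have "\<dots> = st (ideal_mult D (ideal_mult D B C) A)" using im_assoc im_comm by metis
  also have "\<dots> = st (ideal_mult D (st (ideal_mult D B C)) A)"
    by (rule st_mult_left[OF frac_mult[OF fB fC] fA, symmetric])
  also have "\<dots> = sm A (sm B C)" unfolding sm_def using im_comm by metis
  finally show ?thesis .
qed

lemma sm_swap: assumes "sid a" "sid b" "sid c" "sid d"
  shows "sm (sm a b) (sm c d) = sm (sm a c) (sm b d)"
proof -
  have "sm (sm a b) (sm c d) = sm a (sm b (sm c d))" using assms sm_assoc sm_closed by metis
  also have "sm b (sm c d) = sm (sm b c) d" using assms sm_assoc by metis
  also have "sm b c = sm c b" by (rule sm_comm)
  also have "sm (sm c b) d = sm c (sm b d)" using assms sm_assoc by metis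
  also have "sm a (sm c (sm b d)) = sm (sm a c) (sm b d)" using assms sm_assoc sm_closed by metis
  finally show ?thesis .
qed

lemma sid_D: "sid D" unfolding star_ideal_def using frac_D st_D by blast

lemma sm_D: assumes "sid A" shows "sm D A = A"
  unfolding sm_def using DA[OF frac_sub[OF sidD(1)[OF assms]]] sidD(2)[OF assms] by simp

lemma sm_D2: assumes "sid A" shows "sm A D = A" using sm_D[OF assms] sm_comm by metis

lemma sid_principal: "x \<noteq> 0 \<Longrightarrow> sid (Defs.principal D x)"
  unfolding star_ideal_def using frac_principal st_princ by blast

lemma sm_principal: assumes A: "sid A" and x: "x \<noteq> 0" shows "sm (Defs.principal D x) A = scale x A"
proof -
  have "sm (Defs.principal D x) A = st (scale x A)"
    unfolding sm_def using scale_eq[OF frac_sub[OF sidD(1)[OF A]]] by simp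
  also have "\<dots> = scale x A" using st_scale[OF x sidD(1)[OF A]] sidD(2)[OF A] by simp
  finally show ?thesis .
qed

lemma sm_pp: assumes "x \<noteq> 0" "y \<noteq> 0"
  shows "sm (Defs.principal D x) (Defs.principal D y) = Defs.principal D (x * y)"
  using sm_principal[OF sid_principal[OF assms(2)] assms(1)] scale_principal by simp

lemma pow_Suc: "star_pow D st A (Suc n) = sm (star_pow D st A n) A" unfolding sm_def by (rule star_pow.simps(2))

lemma pow_closed: "sid A \<Longrightarrow> sid (star_pow D st A n)"
  by (induction n) (auto simp: pow_Suc sid_D sm_closed)

lemma pow_add: assumes A: "sid A" shows "star_pow D st A (m + n) = sm (star_pow D st A m) (star_pow D st A n)"
proof (induction n)
  case 0
  then show ?case using sm_D2[OF pow_closed[OF A]] by simp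
next
  case (Suc n)
  have "star_pow D st A (m + Suc n) = sm (star_pow D st A (m + n)) A" using pow_Suc by simp
  also have "\<dots> = sm (sm (star_pow D st A m) (star_pow D st A n)) A" using Suc by simp
  also have "\<dots> = sm (star_pow D st A m) (sm (star_pow D st A n) A)" using sm_assoc pow_closed A by blast
  also have "\<dots> = sm (star_pow D st A m) (star_pow D st A (Suc n))" using pow_Suc by simp
  finally show ?case .
qed

lemma pow_mult: assumes A: "sid A" shows "star_pow D st A (m * n) = star_pow D st (star_pow D st A m) n"
proof (induction n)
  case 0
  then show ?case by simp
next
  case (Suc n)
  have "star_pow D st A (m * Suc n) = star_pow D st A (m * n + m)" by (simp add: add.commute)
  also have "\<dots> = sm (star_pow D st A (m * n)) (star_pow D st A m)" by (rule pow_add[OF A])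
  also have "\<dots> = star_pow D st (star_pow D st A m) (Suc n)" using Suc pow_Suc by simp
  finally show ?case .
qed

lemma pow_distrib: assumes A: "sid A" and B: "sid B"
  shows "star_pow D st (sm A B) n = sm (star_pow D st A n) (star_pow D st B n)"
proof (induction n)
  case 0
  then show ?case using sm_D[OF sid_D] by simp
next
  case (Suc n)
  have "star_pow D st (sm A B) (Suc n) = sm (sm (star_pow D st A n) (star_pow D st B n)) (sm A B)"
    using Suc pow_Suc by simp
  also have "\<dots> = sm (sm (star_pow D st A n) A) (sm (star_pow D st B n) B)"
    using sm_swap pow_closed A B by blast
  finally show ?case using pow_Suc by simp
qed

lemma pow_principal: assumes x: "x \<noteq> 0"
  shows "star_pow D st (Defs.principal D x) n = Defs.principal D (x ^ n)"
proof (induction n)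
  case 0
  then show ?case by (metis principal_one power_0 star_pow.simps(1))
next
  case (Suc n)
  have "star_pow D st (Defs.principal D x) (Suc n) = sm (Defs.principal D (x ^ n)) (Defs.principal D x)"
    using Suc pow_Suc by simp
  also have "\<dots> = Defs.principal D (x ^ n * x)" using sm_pp[of "x ^ n" x] x by simp
  finally show ?case by (simp add: mult.commute)
qed

lemma is_principal_pow: "is_principal D P \<Longrightarrow> is_principal D (star_pow D st P n)"
  unfolding is_principal_def using pow_principal by (metis power_not_zero)

lemma sm_is_principal: "is_principal D P \<Longrightarrow> is_principal D Q \<Longrightarrow> is_principal D (sm P Q)"
  unfolding is_principal_def using sm_pp by (metis mult_eq_0_iff)

lemma cancel: assumes A: "sid A" and w: "w \<noteq> 0" and P: "is_principal D (sm A (Defs.principal D w))"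
  shows "is_principal D A"
proof -
  obtain z where z: "z \<noteq> 0" "sm A (Defs.principal D w) = Defs.principal D z" using P unfolding is_principal_def by blast
  have "scale w A = Defs.principal D z" using z sm_principal[OF A w] sm_comm by metis
  then have "scale (inverse w) (scale w A) = Defs.principal D (inverse w * z)" using scale_principal by simp
  moreover have "scale (inverse w) (scale w A) = A" using w scale_scale[of "inverse w" w A] scale_one by simp
  moreover have "inverse w * z \<noteq> 0" using z w by simp
  ultimately show ?thesis unfolding is_principal_def by metis
qed

lemma pow_eq: assumes A: "frac_ideal D A"
  shows "frac_ideal D (ideal_pow D A n) \<and> st (ideal_pow D A n) = star_pow D st A n"
proof (induction n)
  case 0
  then show ?case using frac_D st_D by simp
next
  case (Suc n)
  then have f: "frac_ideal D (ideal_pow D A n)" and e: "st (ideal_pow D A n) = star_pow D st A n" by auto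
  have "st (ideal_pow D A (Suc n)) = st (ideal_mult D (st (ideal_pow D A n)) A)"
    using st_mult_left[OF f A] by simp
  moreover have "star_pow D st A (Suc n) = st (ideal_mult D (star_pow D st A n) A)"
    using pow_Suc[of A n] unfolding sm_def .
  ultimately show ?case using e frac_mult[OF f A] by simp
qed

end



context SD begin

lemma inv_sub_D: "ideal_mult D A (ideal_inv D A) \<subseteq> D"
proof (rule im_least[OF D_submodD])
  fix a u assume "a \<in> A" "u \<in> ideal_inv D A"
  then have "u * a \<in> D" unfolding ideal_inv_def by blast
  then show "a * u \<in> D" by (simp add: mult.commute)
qed

lemma frac_AinvA: "frac_ideal D A \<Longrightarrow> frac_ideal D (ideal_mult D A (ideal_inv D A))"
  using frac_mult frac_inv by blast

lemma st_AinvA_sub: "frac_ideal D A \<Longrightarrow> st (ideal_mult D A (ideal_inv D A)) \<subseteq> D"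
  using st_int[OF frac_AinvA inv_sub_D] by blast

lemma inv_st: assumes A: "frac_ideal D A" shows "ideal_inv D (st A) = ideal_inv D A"
proof
  show "ideal_inv D (st A) \<subseteq> ideal_inv D A" unfolding ideal_inv_def using st_ext[OF A] by blast
  show "ideal_inv D A \<subseteq> ideal_inv D (st A)"
  proof
    fix u assume u: "u \<in> ideal_inv D A"
    show "u \<in> ideal_inv D (st A)"
    proof (cases "u = 0")
      case True then show ?thesis unfolding ideal_inv_def using D0 by simp
    next
      case False
      have "scale u A \<subseteq> D" using u unfolding ideal_inv_def scale_def by blast
      then have "st (scale u A) \<subseteq> D" using st_int[OF frac_scale[OF False A]] by blast
      then have "scale u (st A) \<subseteq> D" using st_scale[OF False A] by simp
      then show ?thesis unfolding ideal_inv_def scale_def by blast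
    qed
  qed
qed

lemma inv_prod_sub: assumes A: "frac_ideal D A" and B: "frac_ideal D B"
  shows "ideal_mult D (ideal_inv D A) (ideal_inv D B) \<subseteq> ideal_inv D (ideal_mult D A B)"
proof (rule im_least[OF frac_sub[OF frac_inv[OF frac_mult[OF A B]]]])
  fix a' b' assume a': "a' \<in> ideal_inv D A" and b': "b' \<in> ideal_inv D B"
  have "ideal_mult D A B \<subseteq> {u. (a' * b') * u \<in> D}"
  proof (rule im_least[OF submod_pre[OF D_submodD]])
    fix a b assume "a \<in> A" "b \<in> B"
    then have "(a' * a) * (b' * b) \<in> D" using a' b' Dmul unfolding ideal_inv_def by blast
    then show "a * b \<in> {u. (a' * b') * u \<in> D}" by (simp add: ac_simps)
  qed
  then show "a' * b' \<in> ideal_inv D (ideal_mult D A B)" unfolding ideal_inv_def by blast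
qed

lemma inv_mult: assumes A: "star_invertible D st A" and B: "star_invertible D st B"
  shows "star_invertible D st (sm A B)"
proof -
  have fA: "frac_ideal D A" and fB: "frac_ideal D B" using A B unfolding star_invertible_def by auto
  define C where "C = ideal_mult D A B"
  have fC: "frac_ideal D C" unfolding C_def using fA fB by (rule frac_mult)
  have e1: "st (ideal_mult D (st C) (ideal_inv D (st C))) = st (ideal_mult D C (ideal_inv D C))"
    using inv_st[OF fC] st_mult_left[OF fC frac_inv[OF fC]] by simp
  define A' where "A' = ideal_inv D A"
  define B' where "B' = ideal_inv D B"
  have fA': "frac_ideal D A'" and fB': "frac_ideal D B'" unfolding A'_def B'_def using frac_inv fA fB by auto
  have fAA: "frac_ideal D (ideal_mult D A A')" and fBB: "frac_ideal D (ideal_mult D B B')"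
    using frac_mult fA fB fA' fB' by auto
  have "st (ideal_mult D (ideal_mult D A A') (ideal_mult D B B')) = st (ideal_mult D (st (ideal_mult D A A')) (ideal_mult D B B'))"
    using st_mult_left[OF fAA fBB] by simp
  also have "st (ideal_mult D A A') = D" using A unfolding star_invertible_def A'_def by simp
  also have "st (ideal_mult D D (ideal_mult D B B')) = st (ideal_mult D B B')" using DA[OF im_submod] by simp
  also have "\<dots> = D" using B unfolding star_invertible_def B'_def by simp
  finally have e2: "st (ideal_mult D C (ideal_mult D A' B')) = D" unfolding C_def using im_swap by metis
  have "ideal_mult D C (ideal_mult D A' B') \<subseteq> ideal_mult D C (ideal_inv D C)"
    using im_mono[OF order_refl inv_prod_sub[OF fA fB]] unfolding C_def A'_def B'_def by blast
  then have "D \<subseteq> st (ideal_mult D C (ideal_inv D C))"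
    using st_mono[OF frac_mult[OF fC frac_mult[OF fA' fB']] frac_AinvA[OF fC]] e2 by blast
  then have "st (ideal_mult D C (ideal_inv D C)) = D" using st_AinvA_sub[OF fC] by blast
  then show ?thesis unfolding star_invertible_def sm_def using e1 st_frac[OF fC] unfolding C_def by simp
qed

lemma factor_inv: assumes I: "frac_ideal D I" and R: "frac_ideal D R" and x: "x \<noteq> 0"
  and e: "st (ideal_mult D I R) = Defs.principal D x"
  shows "star_invertible D st I"
proof -
  define S where "S = scale (inverse x) R"
  have fS: "frac_ideal D S" unfolding S_def using frac_scale[OF _ R] x by simp
  have IR: "frac_ideal D (ideal_mult D I R)" using I R by (rule frac_mult)
  have "S \<subseteq> ideal_inv D I"
  proof
    fix s assume "s \<in> S"
    then obtain r where r: "r \<in> R" "s = inverse x * r" unfolding S_def scale_def by blast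
    show "s \<in> ideal_inv D I" unfolding ideal_inv_def mem_Collect_eq
    proof
      fix i assume "i \<in> I"
      then have "i * r \<in> st (ideal_mult D I R)" using st_ext[OF IR] im_gen r by blast
      then obtain d where d: "d \<in> D" "i * r = x * d" using e unfolding principal_def by auto
      have "s * i = inverse x * (i * r)" using r by (simp add: ac_simps)
      also have "\<dots> = d" using d x by simp
      finally show "s * i \<in> D" using d by simp
    qed
  qed
  have "ideal_mult D I S = ideal_mult D I (ideal_mult D (Defs.principal D (inverse x)) R)"
    unfolding S_def using scale_eq[OF frac_sub[OF R]] by simp
  also have "\<dots> = ideal_mult D (Defs.principal D (inverse x)) (ideal_mult D I R)"
    using im_assoc im_comm by metis
  also have "\<dots> = scale (inverse x) (ideal_mult D I R)" using scale_eq[OF im_submod] by simp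
  finally have "st (ideal_mult D I S) = scale (inverse x) (st (ideal_mult D I R))"
    using st_scale[OF _ IR] x by simp
  also have "\<dots> = Defs.principal D (inverse x * x)" using e scale_principal by simp
  also have "\<dots> = D" using x principal_one by simp
  finally have "D \<subseteq> st (ideal_mult D I (ideal_inv D I))"
    using st_mono[OF frac_mult[OF I fS] frac_AinvA[OF I]] im_mono[OF order_refl \<open>S \<subseteq> ideal_inv D I\<close>] by blast
  then show ?thesis unfolding star_invertible_def using I st_AinvA_sub[OF I] by blast
qed

lemma inv_principal: assumes x: "x \<noteq> 0" shows "star_invertible D st (Defs.principal D x)"
proof -
  have "st (ideal_mult D (Defs.principal D x) (Defs.principal D 1)) = Defs.principal D x"
    using principal_one DA[OF principal_submod] im_comm st_princ[OF x] by metis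
  then show ?thesis using factor_inv[OF frac_principal[OF x] frac_principal[of 1] x] by simp
qed

lemma frac_prod: "(\<forall>I\<in>set Is. frac_ideal D I) \<Longrightarrow> frac_ideal D (ideal_prod D Is)"
  by (induction Is) (auto simp: ideal_prod_def frac_D frac_mult)

end



context SD begin

lemma torsion_of_waf: assumes W: "star_waf_SH D st"
  shows "star_class_group_torsion D st"
  unfolding star_class_group_torsion_def
proof (intro allI impI)
  fix J assume "star_invertible D st J \<and> star_ideal D st J"
  then have invJ: "star_invertible D st J" and sJ: "sid J" by auto
  have fJ: "frac_ideal D J" using sJ sidD by auto
  show "\<exists>n\<ge>1. is_principal D (star_pow D st J n)"
  proof (cases "\<exists>z. nonzero_nonunit D z")
    case False
    have DU: "D = UNIV"
    proof -
      { fix z :: 'k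
        obtain a b where ab: "a \<in> D" "b \<in> D" "b \<noteq> 0" "z = a / b" using Dfrac by blast
        have "inverse b \<in> D" using False ab unfolding nonzero_nonunit_def by blast
        then have "z \<in> D" using ab Dmul by (simp add: divide_inverse) }
      then show ?thesis by blast
    qed
    obtain y where y: "y \<in> J" "y \<noteq> 0" using frac_nz[OF fJ] by blast
    have "J = UNIV"
    proof -
      { fix z :: 'k
        have "(z * inverse y) * y \<in> J" using y frac_sub[OF fJ] DU unfolding D_submod_def by blast
        moreover have "(z * inverse y) * y = z" using y by (simp add: mult.assoc)
        ultimately have "z \<in> J" by simp }
      then show ?thesis by blast
    qed
    then have "J = Defs.principal D 1" using DU by (metis principal_one)
    moreover have "star_pow D st J 1 = J" using pow_Suc[of J 0] sm_D[OF sJ] by simp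
    ultimately have "is_principal D (star_pow D st J 1)" unfolding is_principal_def
      by (metis One_nat_def one_neq_zero)
    then show ?thesis by blast
  next
    case True
    then obtain z0 where z0: "z0 \<in> D" "z0 \<noteq> 0" "inverse z0 \<notin> D" unfolding nonzero_nonunit_def by blast
    obtain d where d: "d \<in> D" "d \<noteq> 0" "\<forall>u\<in>J. d * u \<in> D" using fJ unfolding frac_ideal_def by blast
    obtain y where y: "y \<in> J" "y \<noteq> 0" using frac_nz[OF fJ] by blast
    define x where "x = (d * z0) * y"
    have xJ: "x \<in> J" unfolding x_def using y d z0 Dmul frac_sub[OF fJ] unfolding D_submod_def by blast
    have dy: "d * y \<in> D" using d y by blast
    have xD: "x \<in> D" unfolding x_def using Dmul[OF dy z0(1)] by (simp add: ac_simps)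
    have x0: "x \<noteq> 0" unfolding x_def using d y z0 by simp
    have xnu: "inverse x \<notin> D"
    proof
      assume "inverse x \<in> D"
      then have "inverse x * (d * y) \<in> D" using dy Dmul by blast
      moreover have "inverse x * (d * y) = inverse z0" unfolding x_def using d y z0 by (simp add: field_simps)
      ultimately show False using z0 by simp
    qed
    then have "nonzero_nonunit D x" unfolding nonzero_nonunit_def using xD x0 by blast
    then obtain Is where Is: "\<forall>I\<in>set Is. star_waf_homog D st I" "Defs.principal D x = st (ideal_prod D Is)"
      using W unfolding star_waf_SH_def by blast
    have "Is \<noteq> []"
    proof
      assume "Is = []"
      then have "Defs.principal D x = D" using Is(2) st_D by (simp add: ideal_prod_def)
      then have "1 \<in> Defs.principal D x" using D1 by simp
      then obtain e where "e \<in> D" "1 = x * e" unfolding principal_def by blast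
      then have "inverse x \<in> D" using x0 by (metis inverse_unique)
      then show False using xnu by simp
    qed
    then obtain I R where IR: "Is = I # R" by (cases Is) auto
    have wI: "star_waf_homog D st I" using Is IR by simp
    have sI: "sid I" using wI unfolding star_waf_homog_def star_homog_def proper_integral_star_ideal_def by blast
    have fI: "frac_ideal D I" using sI sidD by auto
    have fR: "frac_ideal D (ideal_prod D R)"
    proof (rule frac_prod, intro ballI)
      fix K assume "K \<in> set R"
      then have "star_waf_homog D st K" using Is IR by simp
      then show "frac_ideal D K" unfolding star_waf_homog_def star_homog_def proper_integral_star_ideal_def star_ideal_def by blast
    qed
    have eIR: "st (ideal_mult D I (ideal_prod D R)) = Defs.principal D x"
      using Is(2) IR by (simp add: ideal_prod_def)
    have invI: "star_invertible D st I" by (rule factor_inv[OF fI fR x0 eIR])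
    have waf: "\<And>J'. star_invertible D st J' \<Longrightarrow> sid J' \<Longrightarrow> I \<subseteq> J' \<Longrightarrow> \<exists>j\<ge>1. is_principal D (star_pow D st J' j)"
    proof -
      fix J' assume a: "star_invertible D st J'" "sid J'" "I \<subseteq> J'"
      then obtain j where "j \<ge> 1" "is_principal D (st (ideal_pow D J' j))"
        using wI invI unfolding star_waf_homog_def by blast
      then show "\<exists>j\<ge>1. is_principal D (star_pow D st J' j)" using pow_eq[OF sidD(1)[OF a(2)]] by metis
    qed
    obtain m where m: "m \<ge> 1" "is_principal D (star_pow D st I m)" using waf[OF invI sI order_refl] by blast
    define P where "P = Defs.principal D (inverse x)"
    have sP: "sid P" unfolding P_def using sid_principal x0 by simp
    define J1 where "J1 = sm P (sm J I)"
    have sJI: "sid (sm J I)" using sm_closed sJ sI by blast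
    have sJ1: "sid J1" unfolding J1_def using sm_closed sP sJI by blast
    have iJ1: "star_invertible D st J1" unfolding J1_def P_def
      using inv_mult[OF inv_principal inv_mult[OF invJ invI]] x0 by simp
    have "I \<subseteq> J1"
    proof
      fix i assume i: "i \<in> I"
      have "x * i \<in> sm J I" unfolding sm_def using st_ext[OF frac_mult[OF fJ fI]] im_gen[OF xJ i] by blast
      then have "inverse x * (x * i) \<in> scale (inverse x) (sm J I)" unfolding scale_def by blast
      moreover have "inverse x * (x * i) = i" using x0 by (simp add: field_simps)
      ultimately show "i \<in> J1" unfolding J1_def P_def using sm_principal[OF sJI, of "inverse x"] x0 by simp
    qed
    obtain j where j: "j \<ge> 1" "is_principal D (star_pow D st J1 j)" using waf[OF iJ1 sJ1 \<open>I \<subseteq> J1\<close>] by blast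
    define N where "N = j * m"
    have N1: "N \<ge> 1" unfolding N_def using j m by simp
    have pJ1: "is_principal D (star_pow D st J1 N)"
      unfolding N_def using pow_mult[OF sJ1, of j m] is_principal_pow[OF j(2), of m] by simp
    have pI: "is_principal D (star_pow D st I N)"
      unfolding N_def mult.commute[of j m] using pow_mult[OF sI, of m j] is_principal_pow[OF m(2), of j] by simp
    have pP: "is_principal D (star_pow D st P N)" unfolding P_def is_principal_def
      using pow_principal[of "inverse x" N] x0 by (intro exI[of _ "inverse x ^ N"]) simp
    have sPN: "sid (star_pow D st P N)" and sJN: "sid (star_pow D st J N)" and sIN: "sid (star_pow D st I N)"
      using pow_closed sP sJ sI by auto
    have "star_pow D st J1 N = sm (star_pow D st P N) (star_pow D st (sm J I) N)"
      unfolding J1_def by (rule pow_distrib[OF sP sJI])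
    also have "star_pow D st (sm J I) N = sm (star_pow D st J N) (star_pow D st I N)"
      by (rule pow_distrib[OF sJ sI])
    also have "sm (star_pow D st P N) (sm (star_pow D st J N) (star_pow D st I N))
        = sm (sm (star_pow D st P N) (star_pow D st J N)) (star_pow D st I N)"
      by (rule sm_assoc[OF sPN sJN sIN, symmetric])
    also have "sm (star_pow D st P N) (star_pow D st J N) = sm (star_pow D st J N) (star_pow D st P N)"
      by (rule sm_comm)
    also have "sm (sm (star_pow D st J N) (star_pow D st P N)) (star_pow D st I N)
        = sm (star_pow D st J N) (sm (star_pow D st P N) (star_pow D st I N))"
      by (rule sm_assoc[OF sJN sPN sIN])
    finally have eq: "star_pow D st J1 N = sm (star_pow D st J N) (sm (star_pow D st P N) (star_pow D st I N))" .
    obtain w where w: "w \<noteq> 0" "sm (star_pow D st P N) (star_pow D st I N) = Defs.principal D w"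
      using sm_is_principal[OF pP pI] unfolding is_principal_def by blast
    have "is_principal D (sm (star_pow D st J N) (Defs.principal D w))" using pJ1 eq w(2) by simp
    then have "is_principal D (star_pow D st J N)" by (rule cancel[OF sJN w(1)])
    then show ?thesis using N1 by blast
  qed
qed

lemma waf_of_SH: assumes S: "star_SH D st" and T: "star_class_group_torsion D st"
  shows "star_waf_SH D st"
  unfolding star_waf_SH_def
proof (intro allI impI)
  fix x assume "nonzero_nonunit D x"
  then obtain Is where Is: "\<forall>I\<in>set Is. star_homog D st I" "Defs.principal D x = st (ideal_prod D Is)"
    using S unfolding star_SH_def by blast
  have "\<forall>I\<in>set Is. star_waf_homog D st I"
  proof
    fix I assume "I \<in> set Is"
    then have h: "star_homog D st I" using Is by blast
    show "star_waf_homog D st I" unfolding star_waf_homog_def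
    proof (intro conjI impI allI h)
      fix J assume a: "star_invertible D st J \<and> star_ideal D st J \<and> I \<subseteq> J"
      then obtain n where "n \<ge> 1" "is_principal D (star_pow D st J n)"
        using T unfolding star_class_group_torsion_def by blast
      then show "\<exists>j\<ge>1. is_principal D (st (ideal_pow D J j))"
        using pow_eq a unfolding star_ideal_def by metis
    qed
  qed
  then show "\<exists>Is. (\<forall>I\<in>set Is. star_waf_homog D st I) \<and> Defs.principal D x = st (ideal_prod D Is)"
    using Is by blast
qed

lemma SH_of_waf: assumes W: "star_waf_SH D st" shows "star_SH D st"
  unfolding star_SH_def
proof (intro allI impI)
  fix x assume "nonzero_nonunit D x"
  then obtain Is where Is: "\<forall>I\<in>set Is. star_waf_homog D st I" "Defs.principal D x = st (ideal_prod D Is)"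
    using W unfolding star_waf_SH_def by blast
  have "\<forall>I\<in>set Is. star_homog D st I" using Is(1) unfolding star_waf_homog_def by blast
  then show "\<exists>Is. (\<forall>I\<in>set Is. star_homog D st I) \<and> Defs.principal D x = st (ideal_prod D Is)"
    using Is(2) by blast
qed

end

theorem mainTheorem18:
  fixes D :: "'k::field set" and st :: "'k set \<Rightarrow> 'k set"
  assumes "is_domain_with_frac_field D"
    and "star_operation D st"
    and "finite_character D st"
  shows "star_waf_SH D st \<longleftrightarrow> star_SH D st \<and> star_class_group_torsion D st"
proof -
  interpret SD D st using assms(1,2) by unfold_locales
  show ?thesis using torsion_of_waf waf_of_SH SH_of_waf by blast
qed


end
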